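(* Let $\delta_{\ell,0}>0$ and define $\delta_{\ell,i+1}=\delta_{\ell,i}/(1+\delta_{\ell,i})^2$ for $i\ge0$. Then there exists a constant $c_\ell>0$ such that for all $i\ge1$, $$\frac1{2i}-\frac{c_\ell+\log i}{8i^2}<\delta_{\ell,i}<\frac1{2i}.$$
   Context: In the paper, $\delta_{\ell,i}$ is the eigenvalue at iteration $i$ of deterministic EKI of the generalized eigenvalue problem $H\Gamma_iH^\top w_\ell=\delta_{\ell,i}\Sigma w_\ell$ along a fixed eigenvector $w_\ell$, and these satisfy the stated recurrence. *)

theory Defs
  imports "HOL-Analysis.Analysis"
begin

end

theory Submission
  imports Defs
begin

theorem proposition3p6:
  fixes \<delta> :: "nat \<Rightarrow> real"
  assumes pos0: "\<delta> 0 > 0"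
    and rec: "\<And>i. \<delta> (Suc i) = \<delta> i / (1 + \<delta> i)^2"
  shows "\<exists>c > 0. \<forall>i \<ge> 1.
           1 / (2 * real i) - (c + ln (real i)) / (8 * (real i)^2) < \<delta> i
           \<and> \<delta> i < 1 / (2 * real i)"
proof -
  have dpos: "\<delta> i > 0" for i
    by (induction i) (use pos0 rec in auto)
  define u where "u i = 1 / \<delta> i" for i
  have upos: "u i > 0" for i using dpos[of i] by (simp add: u_def)
  have urec: "u (Suc i) = u i + 2 + 1 / u i" for i
  proof -
    have "u (Suc i) = (1 + \<delta> i)^2 / \<delta> i" by (simp add: u_def rec)
    also have "\<dots> = 1 / \<delta> i + 2 + \<delta> i" using dpos[of i]
      by (simp add: field_simps power2_eq_square)
    finally show ?thesis by (simp add: u_def)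
  qed
  define v where "v i = u i - 2 * real i" for i
  have vrec: "v (Suc i) = v i + 1 / u i" for i by (simp add: v_def urec)
  have vge: "v i \<ge> u 0" for i
  proof (induction i)
    case 0 then show ?case by (simp add: v_def)
  next
    case (Suc i) then show ?case using vrec[of i] upos[of i]
      by (smt (verit) divide_pos_pos)
  qed
  have uge: "u i \<ge> 2 * real i" for i using vge[of i] upos[of 0] by (simp add: v_def)
  have vsmall: "v (Suc n) \<le> v 1 + 1/2 + ln (real n) / 2" if "n \<ge> 1" for n
    using that
  proof (induction n rule: dec_induct)
    case base
    have "u 1 \<ge> 2" using uge[of 1] by simp
    then have "1 / u 1 \<le> 1/2" by (simp add: field_simps)
    then show ?case using vrec[of 1] by simp
  next
    case (step n)
    have n1: "real n \<ge> 1" using step.hyps by simp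
    have "u (Suc n) \<ge> 2 * (real n + 1)" using uge[of "Suc n"] by simp
    then have a: "1 / u (Suc n) \<le> 1 / (2 * (real n + 1))" using n1
      by (simp add: frac_le)
    have "ln (real n / (real n + 1)) \<le> real n / (real n + 1) - 1"
      using n1 by (intro ln_le_minus_one) auto
    also have "\<dots> = - 1 / (real n + 1)" using n1 by (simp add: field_simps)
    finally have "ln (real n) - ln (real n + 1) \<le> - 1 / (real n + 1)"
      using n1 by (simp add: ln_div)
    then have b: "1 / (2 * (real n + 1)) \<le> ln (real n + 1) / 2 - ln (real n) / 2"
      by (simp add: field_simps)
    have "ln (real (Suc n)) = ln (real n + 1)" by simp
    then show ?case using step.IH vrec[of "Suc n"] a b by linarith
  qed
  have vbound: "v i \<le> v 1 + 1/2 + ln (real i) / 2" if i1: "i \<ge> 1" for i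
  proof (cases "i = 1")
    case True then show ?thesis by simp
  next
    case False
    then obtain n where n: "i = Suc n" "n \<ge> 1" using i1
      by (cases i) auto
    have "ln (real n) \<le> ln (real i)" using n by simp
    then show ?thesis using vsmall[OF n(2)] n(1) by simp
  qed
  define c where "c = 2 * v 1 + 2"
  have cpos: "c > 0" using vge[of 1] upos[of 0] by (simp add: c_def)
  show ?thesis
  proof (intro exI[of _ c] conjI cpos allI impI)
    fix i :: nat assume i: "i \<ge> 1"
    have ri: "real i \<ge> 1" using i by simp
    have vi: "v i > 0" using vge[of i] upos[of 0] by simp
    have ui: "u i > 2 * real i" using vi by (simp add: v_def)
    have di: "\<delta> i = 1 / u i" using dpos[of i] by (simp add: u_def)
    show "\<delta> i < 1 / (2 * real i)" using ui ri di
      by (simp add: frac_less2)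
    have eq: "1 / (2 * real i) - \<delta> i = v i / (2 * real i * u i)"
      using ri upos[of i] di by (simp add: v_def field_simps)
    have "v i / (2 * real i * u i) \<le> v i / (2 * real i * (2 * real i))"
      using vi ri ui by (intro divide_left_mono) auto
    also have "\<dots> = 2 * v i / (8 * (real i)^2)" by (simp add: power2_eq_square)
    also have "\<dots> < (c + ln (real i)) / (8 * (real i)^2)"
      using vbound[OF i] ri by (intro divide_strict_right_mono) (auto simp: c_def)
    finally show "1 / (2 * real i) - (c + ln (real i)) / (8 * (real i)^2) < \<delta> i"
      using eq by simp
  qed
qed

end
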